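(* Let $n\ge 1$ be an integer. (1) If $a$ is a real number with $a>2$, then $\max\{B_i(a): 2^{n-1}\le i\le 2^{n}\}=a^{n}=B_{2^n}(a)$. (2) If $0<a<2$, then $$\min\{B_i(a): 2^{n-1}\le i\le 2^{n}\}=\begin{cases} a^{n} & \text{if } 0<a\le 1,\\ a^{n-1} & \text{if } 1<a<2.\end{cases}$$
   Context: The Stern polynomials $B_n(t)\in\mathbb{Z}[t]$, $n\ge 0$, are defined by $B_0(t)=0$, $B_1(t)=1$, $B_{2n}(t)=tB_n(t)$ and $B_{2n+1}(t)=B_n(t)+B_{n+1}(t)$ for $n\ge 1$. *)

theory Defs
  imports "HOL-Computational_Algebra.Polynomial"
begin

function stern_poly :: "nat \<Rightarrow> int poly" where
  "stern_poly n =
     (if n = 0 then 0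
      else if n = 1 then 1
      else if even n then [:0, 1:] * stern_poly (n div 2)
      else stern_poly (n div 2) + stern_poly (n div 2 + 1))"

  by pat_completeness auto
termination by (relation "measure id") (auto elim: oddE)

declare stern_poly.simps [simp del]

definition stern_eval :: "nat \<Rightarrow> real \<Rightarrow> real" where
  "stern_eval n a = poly (map_poly of_int (stern_poly n)) a"

end

theory Submission
  imports Defs
begin

lemma mp_add: "map_poly (of_int :: int \<Rightarrow> real) (p + q) = map_poly of_int p + map_poly of_int q"
  by (rule poly_eqI) (simp add: coeff_map_poly)

lemma se0: "stern_eval 0 a = 0"
  by (simp add: stern_eval_def stern_poly.simps)

lemma se1[simp]: "stern_eval (Suc 0) a = 1"
  by (simp add: stern_eval_def stern_poly.simps)

lemma se_even: "stern_eval (2*m) a = a * stern_eval m a"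
proof (cases "m = 0")
  case True thus ?thesis by (simp add: se0)
next
  case False
  hence "stern_poly (2*m) = [:0, 1:] * stern_poly m"
    by (subst stern_poly.simps) simp
  also have "[:0, 1:] * stern_poly m = pCons 0 (stern_poly m)" by simp
  finally show ?thesis by (simp add: stern_eval_def map_poly_pCons)
qed

lemma se_odd: "stern_eval (Suc (2*m)) a = stern_eval m a + stern_eval (m+1) a"
proof (cases "m = 0")
  case True thus ?thesis by (simp add: se0 se1)
next
  case False
  hence "stern_poly (Suc (2*m)) = stern_poly m + stern_poly (m+1)"
    by (subst stern_poly.simps) simp
  thus ?thesis by (simp add: stern_eval_def mp_add)
qed

lemma split2: fixes i :: nat obtains m where "i = 2*m" | m where "i = 2*m+1"
  by (metis oddE evenE)

lemma se_nonneg: "a \<ge> 0 \<Longrightarrow> stern_eval i a \<ge> 0"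
proof (induction i rule: less_induct)
  case (less i)
  show ?case
  proof (cases i rule: split2)
    case (1 m)
    show ?thesis
    proof (cases "m = 0")
      case True thus ?thesis using 1 by (simp add: se0)
    next
      case False thus ?thesis using 1 less by (simp add: se_even)
    qed
  next
    case (2 m)
    show ?thesis
    proof (cases "m = 0")
      case True thus ?thesis using 2 by simp
    next
      case False
      thus ?thesis using 2 less.IH[of m] less.IH[of "Suc m"] less.prems by (simp add: se_odd)
    qed
  qed
qed

lemma se_pow: "stern_eval (2^n) a = a^n"
  by (induction n) (simp_all add: se1 se_even)

lemma up: "a \<ge> 2 \<Longrightarrow> i \<le> 2^n \<Longrightarrow> stern_eval i a \<le> a^n"
proof (induction n arbitrary: i)
  case 0
  hence "i = 0 \<or> i = 1" by auto
  thus ?case by (auto simp: se0 se1)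
next
  case (Suc n)
  show ?case
  proof (cases i rule: split2)
    case (1 m)
    hence "m \<le> 2^n" using Suc.prems by simp
    hence "stern_eval m a \<le> a^n" using Suc by simp
    thus ?thesis using 1 Suc.prems by (simp add: se_even)
  next
    case (2 m)
    hence "m \<le> 2^n" "m+1 \<le> 2^n" using Suc.prems by simp_all
    hence "stern_eval m a \<le> a^n" "stern_eval (m+1) a \<le> a^n" using Suc by simp_all
    moreover have "2 * a^n \<le> a * a^n" using Suc.prems by (intro mult_right_mono) auto
    ultimately show ?thesis using 2 by (simp add: se_odd)
  qed
qed

lemma low1: "0 \<le> a \<Longrightarrow> a \<le> 1 \<Longrightarrow> 1 \<le> i \<Longrightarrow> i \<le> 2^n \<Longrightarrow> a^n \<le> stern_eval i a"
proof (induction n arbitrary: i)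
  case 0
  hence "i = 1" by auto
  thus ?case by (auto simp: se1)
next
  case (Suc n)
  have an: "a^(Suc n) \<le> a^n" using Suc.prems mult_left_le_one_le[of "a^n" a] by simp
  show ?case
  proof (cases i rule: split2)
    case (1 m)
    hence "m \<le> 2^n" "1 \<le> m" using Suc.prems by simp_all
    hence "a^n \<le> stern_eval m a" using Suc by simp
    thus ?thesis using 1 Suc.prems by (simp add: se_even mult_left_mono)
  next
    case (2 m)
    hence "m+1 \<le> 2^n" using Suc.prems by simp_all
    hence "a^n \<le> stern_eval (m+1) a" using Suc by simp
    moreover have "0 \<le> stern_eval m a" using Suc.prems se_nonneg by simp
    ultimately show ?thesis using 2 an by (simp add: se_odd)
  qed
qed

lemma low2: "1 \<le> a \<Longrightarrow> a \<le> 2 \<Longrightarrow> 2^n \<le> i \<Longrightarrow> i \<le> 2^(Suc n) \<Longrightarrow> a^n \<le> stern_eval i a"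
proof (induction n arbitrary: i)
  case 0
  hence "i = 1 \<or> i = 2" by auto
  thus ?case using 0 se_even[of 1 a] by (auto simp: se1)
next
  case (Suc n)
  show ?case
  proof (cases i rule: split2)
    case (1 m)
    hence "m \<le> 2^Suc n" "2^n \<le> m" using Suc.prems by simp_all
    hence "a^n \<le> stern_eval m a" using Suc by simp
    thus ?thesis using 1 Suc.prems by (simp add: se_even mult_left_mono)
  next
    case (2 m)
    have "(2::nat)^Suc n \<noteq> 2*m+1"
    proof
      assume "(2::nat)^Suc n = 2*m+1"
      hence "even (2*m+1)" by (metis dvd_triv_left power_Suc)
      thus False by simp
    qed
    hence "2^Suc n < i" using 2 Suc.prems by (metis le_neq_implies_less)
    hence "2^n \<le> m" using 2 by simp
    have "2*m + 1 \<le> 2^Suc (Suc n)" using 2 Suc.prems by simp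
    moreover have "(2::nat)^Suc (Suc n) \<noteq> 2*m+1"
    proof
      assume "(2::nat)^Suc (Suc n) = 2*m+1"
      hence "even (2*m+1)" by (metis dvd_triv_left power_Suc)
      thus False by simp
    qed
    ultimately have "2*m+1 < 2^Suc(Suc n)" by simp
    hence "m+1 \<le> 2^Suc n" by simp
    have "a^n \<le> stern_eval m a" using Suc \<open>2^n \<le> m\<close> \<open>m+1 \<le> 2^Suc n\<close> by simp
    moreover have "a^n \<le> stern_eval (m+1) a" using Suc \<open>2^n \<le> m\<close> \<open>m+1 \<le> 2^Suc n\<close> by simp
    moreover have "a * a^n \<le> 2 * a^n" using Suc.prems by (intro mult_right_mono) auto
    ultimately show ?thesis using 2 by (simp add: se_odd)
  qed
qed

theorem theorem2p7:
  fixes n :: nat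
  assumes "n \<ge> 1"
  shows "(\<forall>a::real. a > 2 \<longrightarrow>
           Max ((\<lambda>i. stern_eval i a) ` {2^(n-1)..2^n}) = a ^ n \<and>
           stern_eval (2^n) a = a ^ n) \<and>
         (\<forall>a::real. 0 < a \<and> a < 2 \<longrightarrow>
           Min ((\<lambda>i. stern_eval i a) ` {2^(n-1)..2^n}) =
             (if a \<le> 1 then a ^ n else a ^ (n - 1)))"
proof (intro conjI allI impI)
  obtain k where k: "n = Suc k" using assms by (cases n) auto
  have fin: "finite ((\<lambda>i. stern_eval i a) ` {2^(n-1)..2^n})" for a by simp
  fix a :: real
  {
    assume a: "a > 2"
    show "stern_eval (2^n) a = a^n" by (rule se_pow)
    show "Max ((\<lambda>i. stern_eval i a) ` {2^(n-1)..2^n}) = a ^ n"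
    proof (rule Max_eqI[OF fin])
      show "y \<le> a^n" if "y \<in> (\<lambda>i. stern_eval i a) ` {2^(n-1)..2^n}" for y
        using that up[of a _ n] a by auto
      show "a^n \<in> (\<lambda>i. stern_eval i a) ` {2^(n-1)..2^n}"
        proof -
          have "2^n \<in> {2^(n-1)..(2::nat)^n}" by (simp add: k)
          thus ?thesis by (metis imageI se_pow)
        qed
    qed
  }
  {
    assume a: "0 < a \<and> a < 2"
    show "Min ((\<lambda>i. stern_eval i a) ` {2^(n-1)..2^n}) =
             (if a \<le> 1 then a ^ n else a ^ (n - 1))"
    proof (cases "a \<le> 1")
      case True
      have "Min ((\<lambda>i. stern_eval i a) ` {2^(n-1)..2^n}) = a^n"
      proof (rule Min_eqI[OF fin])
        show "a^n \<le> y" if yin: "y \<in> (\<lambda>i. stern_eval i a) ` {2^(n-1)..2^n}" for y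
        proof -
          obtain i where "y = stern_eval i a" "2^(n-1) \<le> i" "i \<le> 2^n" using yin by auto
          moreover have "1 \<le> i" proof -
            have "(1::nat) \<le> 2^(n-1)" by simp
            thus ?thesis using \<open>2^(n-1) \<le> i\<close> by linarith
          qed
          ultimately show ?thesis using low1[of a i n] a True by simp
        qed
        show "a^n \<in> (\<lambda>i. stern_eval i a) ` {2^(n-1)..2^n}"
          proof -
          have "2^n \<in> {2^(n-1)..(2::nat)^n}" by (simp add: k)
          thus ?thesis by (metis imageI se_pow)
        qed
      qed
      thus ?thesis using True by simp
    next
      case False
      have "Min ((\<lambda>i. stern_eval i a) ` {2^(n-1)..2^n}) = a^k"
      proof (rule Min_eqI[OF fin])
        show "a^k \<le> y" if "y \<in> (\<lambda>i. stern_eval i a) ` {2^(n-1)..2^n}" for y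
          using that low2[of a k] a False k by auto
        show "a^k \<in> (\<lambda>i. stern_eval i a) ` {2^(n-1)..2^n}"
          proof -
          have "2^k \<in> {2^(n-1)..(2::nat)^n}" by (simp add: k)
          thus ?thesis by (metis imageI se_pow)
        qed
      qed
      thus ?thesis using False k by simp
    qed
  }
qed

end
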